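(* For every share function $\rho$, the $\rho$-blame $\mathbf B^\rho$ is an unbiased importance value function.
   Context: $X$ is a fixed finite set of $n=|X|$ variables. An assignment over $U\subseteq X$ is a map $\mathbf u:U\to\{0,1\}$; $\mathbf u;\mathbf v$ is concatenation of assignments with disjoint domains, $\mathbf u_S$ is restriction. For $S\subseteq X$ and $\mathbf u$ over $X$, $\mathbf u^{\oplus S}$ flips the values of the variables in $S$. $\mathbb B(X)$ is the set of Boolean functions $\{0,1\}^X\to\{0,1\}$, combined pointwise by $\lor,\land$ (juxtaposition), $\oplus$, negation $\overline f$; a variable $x$ also denotes $\mathbf u\mapsto\mathbf u(x)$; $f\ge g$ is pointwise. Cofactor: $f_{\mathbf v}(\mathbf u)=f(\mathbf v;\mathbf u_{X\setminus V})$ for $\mathbf v$ over $V$; $f_{x/c}$ for $V=\{x\}$. $\mathrm{dep}(f)=\{x: f_{x/1}\ne f_{x/0}\}$; $f$ is monotone in $x$ if $f_{x/1}\ge f_{x/0}$. $f^{\oplus y}(\mathbf u)=f(\mathbf u^{\oplus\{y\}})$. For a permutation $\sigma$ of $X$: $(\sigma\mathbf u)(x)=\mathbf u(\sigma^{-1}(x))$, $(\sigma f)(\mathbf u)=f(\sigma^{-1}\mathbf u)$. $f[x/s]=s f_{x/1}\lor\overline s f_{x/0}$. Modularity: $f$ is modular in $g$ if $g$ is not constant and there are $\ell\in\mathbb B(X)$, $z\in X$ with $\mathrm{dep}(\ell)\cap\mathrm{dep}(g)=\emptyset$ and $f=\ell[z/g]$; monotonically modular if moreover $\ell$ is monotone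 in $z$. Then $f_{g/1}:=\ell_{z/1}$, $f_{g/0}:=\ell_{z/0}$ (well defined). A value function is a map $\mathfrak I:X\times\mathbb B(X)\to\mathbb R$, $(x,f)\mapsto\mathfrak I_x(f)$. It is an importance value function (IVF) if for all $x,y\in X$, permutations $\sigma$ of $X$ and $f,g,h\in\mathbb B(X)$: (Bound) $0\le\mathfrak I_x(f)\le1$; (Dum) $\mathfrak I_x(f)=0$ if $x\notin\mathrm{dep}(f)$; (Dic) $\mathfrak I_x(x)=\mathfrak I_x(\overline x)=1$; (Type) $\mathfrak I_x(f)=\mathfrak I_{\sigma(x)}(\sigma f)$ and $\mathfrak I_x(f)=\mathfrak I_x(f^{\oplus y})$; (ModEC) $\mathfrak I_x(f)\ge\mathfrak I_x(h)$ whenever $f$ and $h$ are monotonically modular in $g$, $f_{g/1}\ge h_{g/1}$, $h_{g/0}\ge f_{g/0}$, and $x\in\mathrm{dep}(g)$. $\mathfrak I$ is unbiased if $\mathfrak I_x(g)=\mathfrak I_x(\overline g)$ for all $x,g$. Blame: for $f\in\mathbb B(X)$, $x\in X$ and $\mathbf u$ over $X$, a critical set of $x$ in $f$ under $\mathbf u$ is a set $S\subseteq X\setminus\{x\}$ with $f(\mathbf u)=f(\mathbf u^{\oplus S})$ and $f(\mathbf u)\ne f(\mathbf u^{\oplus(S\cup\{x\})})$; $\mathrm{scs}^{\mathbf u}_x(f)$ is the minimum size of a critical set ($\infty$ if none exists). A share function is $\rho:\mathbb N\cup\{\infty\}\to\mathbb R$ that is monotonically decreasing with $\rho(\infty)=\lim_{k\to\infty}\rho(k)=0$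 and $\rho(0)=1$. The $\rho$-blame is $\mathbf B^\rho_x(f)=\mathbb E_{\mathbf u\in\{0,1\}^X}[\rho(\mathrm{scs}^{\mathbf u}_x(f))]$ (uniform distribution). *)

theory Defs
  imports Complex_Main "HOL-Library.Extended_Nat"
begin

type_synonym 'x assignment = "'x \<Rightarrow> bool"
type_synonym 'x boolfun = "('x \<Rightarrow> bool) \<Rightarrow> bool"

definition flip :: "'x set \<Rightarrow> 'x assignment \<Rightarrow> 'x assignment" where
  "flip S u = (\<lambda>x. if x \<in> S then \<not> u x else u x)"

definition cof :: "'x boolfun \<Rightarrow> 'x \<Rightarrow> bool \<Rightarrow> 'x boolfun" where
  "cof f x c = (\<lambda>u. f (u(x := c)))"

definition dep :: "'x boolfun \<Rightarrow> 'x set" where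
  "dep f = {x. cof f x True \<noteq> cof f x False}"

definition monotone_in :: "'x boolfun \<Rightarrow> 'x \<Rightarrow> bool" where
  "monotone_in f x \<longleftrightarrow> (\<forall>u. cof f x False u \<longrightarrow> cof f x True u)"

definition subst :: "'x boolfun \<Rightarrow> 'x \<Rightarrow> 'x boolfun \<Rightarrow> 'x boolfun" where
  "subst f x s = (\<lambda>u. (s u \<and> cof f x True u) \<or> (\<not> s u \<and> cof f x False u))"

definition flipfun :: "'x boolfun \<Rightarrow> 'x \<Rightarrow> 'x boolfun" where
  "flipfun f y = (\<lambda>u. f (flip {y} u))"

definition perm_asg :: "('x \<Rightarrow> 'x) \<Rightarrow> 'x assignment \<Rightarrow> 'x assignment" where
  "perm_asg \<sigma> u = (\<lambda>x. u (inv \<sigma> x))"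

definition perm_fun :: "('x \<Rightarrow> 'x) \<Rightarrow> 'x boolfun \<Rightarrow> 'x boolfun" where
  "perm_fun \<sigma> f = (\<lambda>u. f (perm_asg (inv \<sigma>) u))"

definition nonconstant :: "'x boolfun \<Rightarrow> bool" where
  "nonconstant g \<longleftrightarrow> (\<exists>u v. g u \<noteq> g v)"

definition mod_witness :: "'x boolfun \<Rightarrow> 'x boolfun \<Rightarrow> 'x boolfun \<Rightarrow> 'x \<Rightarrow> bool" where
  "mod_witness f g l z \<longleftrightarrow> dep l \<inter> dep g = {} \<and> f = subst l z g"

definition modular :: "'x boolfun \<Rightarrow> 'x boolfun \<Rightarrow> bool" where
  "modular f g \<longleftrightarrow> nonconstant g \<and> (\<exists>l z. mod_witness f g l z)"

definition mono_modular :: "'x boolfun \<Rightarrow> 'x boolfun \<Rightarrow> bool" where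
  "mono_modular f g \<longleftrightarrow> nonconstant g \<and> (\<exists>l z. mod_witness f g l z \<and> monotone_in l z)"

text \<open>f_{g/c} := l_{z/c} for a (any) modularity witness (l, z).\<close>
definition mod_cof :: "'x boolfun \<Rightarrow> 'x boolfun \<Rightarrow> bool \<Rightarrow> 'x boolfun" where
  "mod_cof f g c = (let (l, z) = (SOME (l, z). mod_witness f g l z) in cof l z c)"

type_synonym 'x value_fun = "'x \<Rightarrow> 'x boolfun \<Rightarrow> real"

definition IVF :: "'x value_fun \<Rightarrow> bool" where
  "IVF I \<longleftrightarrow>
     (\<forall>x f. 0 \<le> I x f \<and> I x f \<le> 1) \<and>
     (\<forall>x f. x \<notin> dep f \<longrightarrow> I x f = 0) \<and>
     (\<forall>x. I x (\<lambda>u. u x) = 1 \<and> I x (\<lambda>u. \<not> u x) = 1) \<and>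
     (\<forall>x f \<sigma>. bij \<sigma> \<longrightarrow> I x f = I (\<sigma> x) (perm_fun \<sigma> f)) \<and>
     (\<forall>x y f. I x f = I x (flipfun f y)) \<and>
     (\<forall>x f g h. mono_modular f g \<and> mono_modular h g
        \<and> mod_cof h g True \<le> mod_cof f g True
        \<and> mod_cof f g False \<le> mod_cof h g False
        \<and> x \<in> dep g \<longrightarrow> I x f \<ge> I x h)"

definition unbiased :: "'x value_fun \<Rightarrow> bool" where
  "unbiased I \<longleftrightarrow> (\<forall>x g. I x g = I x (\<lambda>u. \<not> g u))"

definition critical_set :: "'x boolfun \<Rightarrow> 'x \<Rightarrow> 'x assignment \<Rightarrow> 'x set \<Rightarrow> bool" where
  "critical_set f x u S \<longleftrightarrow> x \<notin> S \<and> f u = f (flip S u) \<and> f u \<noteq> f (flip (S \<union> {x}) u)"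

text \<open>Minimum size of a critical set; \<infinity> (= Inf {}) if none exists.\<close>
definition scs :: "'x assignment \<Rightarrow> 'x \<Rightarrow> 'x boolfun \<Rightarrow> enat" where
  "scs u x f = Inf {enat (card S) | S. critical_set f x u S}"

definition share_function :: "(enat \<Rightarrow> real) \<Rightarrow> bool" where
  "share_function \<rho> \<longleftrightarrow> antimono \<rho> \<and> \<rho> \<infinity> = 0 \<and>
     ((\<lambda>k::nat. \<rho> (enat k)) \<longlonglongrightarrow> 0) \<and> \<rho> 0 = 1"

definition blame :: "(enat \<Rightarrow> real) \<Rightarrow> ('x::finite) value_fun" where
  "blame \<rho> x f = (\<Sum>u\<in>(UNIV :: 'x assignment set). \<rho> (scs u x f))
                   / real (card (UNIV :: 'x assignment set))"

end

theory Submission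
  imports Defs
begin


lemma flip_comm: "flip A (flip B u) = flip B (flip A u)"
  by (auto simp: flip_def fun_eq_iff)

lemma flip_empty[simp]: "flip {} u = u"
  by (auto simp: flip_def fun_eq_iff)

lemma flip_invol[simp]: "flip {x} (flip {x} u) = u"
  by (auto simp: flip_def fun_eq_iff)

lemma flip_ins: "x \<notin> S \<Longrightarrow> flip (S \<union> {x}) u = flip {x} (flip S u)"
  by (auto simp: flip_def fun_eq_iff)

lemma flip_ins2: "x \<notin> S \<Longrightarrow> flip (S \<union> {x}) (flip {x} u) = flip S u"
  by (auto simp: flip_def fun_eq_iff)

lemma nodep: "x \<notin> dep F \<Longrightarrow> F (w(x:=b)) = F w"
proof -
  assume "x \<notin> dep F"
  then have e: "\<And>w. F (w(x:=True)) = F (w(x:=False))"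
    by (auto simp: dep_def cof_def fun_eq_iff)
  have "F w = F (w(x := w x))" by simp
  then show ?thesis using e by (cases b; cases "w x") (auto)
qed

lemma nodep_flip: "x \<notin> dep F \<Longrightarrow> F (flip {x} w) = F w"
proof -
  assume a: "x \<notin> dep F"
  have "flip {x} w = w(x := \<not> w x)" by (auto simp: flip_def fun_eq_iff)
  then show ?thesis using nodep[OF a] by simp
qed

lemma agree_aux:
  assumes "finite D"
  shows "\<forall>a. {y. a y \<noteq> b y} \<subseteq> D \<longrightarrow> (\<forall>y\<in>dep F. a y = b y) \<longrightarrow> F a = F b"
  using assms
proof (induction D rule: finite_induct)
  case empty
  show ?case
  proof (intro allI impI)
    fix a :: "'a \<Rightarrow> bool" assume "{y. a y \<noteq> b y} \<subseteq> {}"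
    then have "a = b" by (auto simp: fun_eq_iff)
    then show "F a = F b" by simp
  qed
next
  case (insert d D)
  show ?case
  proof (intro allI impI)
    fix a assume s: "{y. a y \<noteq> b y} \<subseteq> insert d D" and ag: "\<forall>y\<in>dep F. a y = b y"
    define a' where "a' = a(d := b d)"
    have "{y. a' y \<noteq> b y} \<subseteq> D"
    proof
      fix y assume "y \<in> {y. a' y \<noteq> b y}"
      then have "y \<noteq> d" "a y \<noteq> b y" by (auto simp: a'_def split: if_splits)
      then show "y \<in> D" using s by blast
    qed
    moreover have "\<forall>y\<in>dep F. a' y = b y" using ag by (simp add: a'_def)
    ultimately have "F a' = F b" using insert.IH by blast
    moreover have "F a' = F a"
    proof (cases "d \<in> dep F")
      case True
      then have "a d = b d" using ag by blast
      then have "a' = a" by (auto simp: fun_eq_iff a'_def)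
      then show ?thesis by simp
    next
      case False then show ?thesis unfolding a'_def by (rule nodep)
    qed
    ultimately show "F a = F b" by simp
  qed
qed

lemma agree: "(\<forall>y\<in>dep F. a y = b y) \<Longrightarrow> F a = F (b :: ('x::finite) \<Rightarrow> bool)"
proof -
  assume h: "\<forall>y\<in>dep F. a y = b y"
  have "{y. a y \<noteq> b y} \<subseteq> UNIV" by simp
  moreover have "finite (UNIV :: 'x set)" by simp
  ultimately show ?thesis using agree_aux[of UNIV b F] h by blast
qed

lemma cof_dep: "y \<notin> dep l \<Longrightarrow> y \<notin> dep (cof l z c)"
proof -
  assume a: "y \<notin> dep l"
  have "\<And>u. l (u(y:=True, z:=c)) = l (u(y:=False, z:=c))"
  proof -
    fix u
    show "l (u(y:=True, z:=c)) = l (u(y:=False, z:=c))"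
    proof (cases "y = z")
      case True then show ?thesis by simp
    next
      case False
      then have "u(y:=True, z:=c) = (u(z:=c))(y:=True)" "u(y:=False, z:=c) = (u(z:=c))(y:=False)"
        by (auto simp: fun_eq_iff)
      then show ?thesis using nodep[OF a] by simp
    qed
  qed
  then show ?thesis unfolding dep_def cof_def by (simp add: fun_eq_iff)
qed

lemma witness_val:
  fixes f g l :: "('x::finite) boolfun"
  assumes w: "mod_witness f g l z" and gv: "g v = c"
  shows "cof l z c u = f (\<lambda>y. if y \<in> dep g then v y else u y)"
proof -
  let ?w = "\<lambda>y. if y \<in> dep g then v y else u y"
  have dis: "dep l \<inter> dep g = {}" and fe: "f = subst l z g" using w by (auto simp: mod_witness_def)
  have "g ?w = g v" using agree[of g ?w v] by simp
  then have gw: "g ?w = c" using gv by simp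
  have "\<forall>y\<in>dep (cof l z c). ?w y = u y" using dis cof_dep[of _ l z c] by auto
  then have "cof l z c ?w = cof l z c u" using agree[of "cof l z c" ?w u] by blast
  moreover have "f ?w = cof l z c ?w" using fe gw by (cases c) (auto simp: subst_def)
  ultimately show ?thesis by simp
qed

lemma witness_unique:
  fixes f g l :: "('x::finite) boolfun"
  assumes "mod_witness f g l z" "mod_witness f g l' z'" "nonconstant g"
  shows "cof l z c = cof l' z' c"
proof -
  obtain v1 v2 where "g v1 \<noteq> g v2" using assms(3) unfolding nonconstant_def by blast
  then obtain v where "g v = c" by (cases c; cases "g v1") auto
  then show ?thesis using witness_val[OF assms(1)] witness_val[OF assms(2)] by (auto simp: fun_eq_iff)
qed

lemma mod_cof_eq:
  fixes f g l :: "('x::finite) boolfun"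
  assumes "mod_witness f g l z" "nonconstant g"
  shows "mod_cof f g c = cof l z c"
proof -
  let ?P = "\<lambda>(l, z). mod_witness f g l z"
  have "?P (l, z)" using assms by simp
  then have "?P (SOME p. ?P p)" by (rule someI)
  then obtain l0 z0 where e: "(SOME p. ?P p) = (l0, z0)" and "mod_witness f g l0 z0"
    by (cases "SOME p. ?P p") auto
  then have "cof l0 z0 c = cof l z c" using witness_unique[of f g l0 z0 l z c] assms by simp
  then show ?thesis unfolding mod_cof_def using e by simp
qed




locale core =
  fixes f h g F0 F1 H0 H1 :: "'x boolfun" and x :: 'x
  assumes fe: "\<And>u. f u = (g u \<and> F1 u \<or> \<not> g u \<and> F0 u)"
    and he: "\<And>u. h u = (g u \<and> H1 u \<or> \<not> g u \<and> H0 u)"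
    and hm: "\<And>u. H0 u \<Longrightarrow> H1 u"
    and le1: "\<And>u. H1 u \<Longrightarrow> F1 u"
    and le0: "\<And>u. F0 u \<Longrightarrow> H0 u"
    and iF0: "\<And>u. F0 (flip {x} u) = F0 u"
    and iF1: "\<And>u. F1 (flip {x} u) = F1 u"
    and iH0: "\<And>u. H0 (flip {x} u) = H0 u"
    and iH1: "\<And>u. H1 (flip {x} u) = H1 u"
begin

lemma L1:
  assumes "f u = h u" "critical_set h x u S"
  shows "critical_set f x u S"
proof -
  let ?w = "flip S u"
  have xS: "x \<notin> S" and c1: "h u = h ?w" and c2: "h u \<noteq> h (flip {x} ?w)"
    using assms(2) flip_ins[of x S u] by (auto simp: critical_set_def)
  show ?thesis
    unfolding critical_set_def flip_ins[OF xS]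
    using xS c1 c2 assms(1) fe[of u] fe[of ?w] fe[of "flip {x} ?w"] he[of u] he[of ?w] he[of "flip {x} ?w"]
      hm[of ?w] le1[of ?w] le0[of ?w] iF0[of ?w] iF1[of ?w] iH0[of ?w] iH1[of ?w]
    by (smt (verit))
qed

lemma L2:
  assumes "f u \<noteq> h u" "g (flip {x} u) \<noteq> g u"
  shows "critical_set f x u {}" "critical_set f x (flip {x} u) {}"
proof -
  have "f u \<noteq> f (flip {x} u)"
    using assms fe[of u] fe[of "flip {x} u"] he[of u]
      hm[of u] le1[of u] le0[of u] iF0[of u] iF1[of u]
    by (smt (verit))
  then show "critical_set f x u {}" "critical_set f x (flip {x} u) {}"
    by (auto simp: critical_set_def)
qed

lemma L3:
  assumes "f u \<noteq> h u" "g (flip {x} u) = g u"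
  shows "critical_set h x (flip {x} u) S \<Longrightarrow> critical_set f x u S"
    and "critical_set h x u S \<Longrightarrow> critical_set f x (flip {x} u) S"
proof -
  have b: "F1 u" "\<not> F0 u" "H0 u = (\<not> g u)" "H1 u = (\<not> g u)"
    using assms fe[of u] he[of u] hm[of u] le1[of u] le0[of u] by blast+
  {
    fix v assume v: "v = u \<or> v = flip {x} u"
    have "F1 v" "\<not> F0 v" "H0 v = (\<not> g u)" "H1 v = (\<not> g u)" "g v = g u"
      using v b assms(2) iF0[of u] iF1[of u] iH0[of u] iH1[of u] by auto
  } note bv = this
  {
    fix v assume v: "v = u \<or> v = flip {x} u" and cr: "critical_set h x (flip {x} v) S"
    let ?w = "flip S v"
    have xS: "x \<notin> S" using cr by (simp add: critical_set_def)
    have c1: "h (flip {x} v) = h (flip {x} ?w)" and c2: "h (flip {x} v) \<noteq> h ?w"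
      using cr flip_ins2[OF xS, of v] flip_comm[of S "{x}" v] by (auto simp: critical_set_def)
    have vv: "flip {x} v = u \<or> flip {x} v = flip {x} u" using v by auto
    have "critical_set f x v S"
      unfolding critical_set_def flip_ins[OF xS]
      using xS c1 c2 bv[OF v] bv[OF vv] v
        fe[of v] fe[of ?w] fe[of "flip {x} ?w"] he[of "flip {x} v"] he[of ?w] he[of "flip {x} ?w"]
        hm[of ?w] le1[of ?w] le0[of ?w] iF0[of ?w] iF1[of ?w] iH0[of ?w] iH1[of ?w]
      by (smt (verit))
  } note main = this
  show "critical_set h x (flip {x} u) S \<Longrightarrow> critical_set f x u S" using main[of u] by simp
  show "critical_set h x u S \<Longrightarrow> critical_set f x (flip {x} u) S"
    using main[of "flip {x} u"] by simp
qed

end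



lemma scs_mono: "(\<And>S. critical_set h x u S \<Longrightarrow> critical_set f x v S) \<Longrightarrow> scs v x f \<le> scs u x h"
  unfolding scs_def by (rule Inf_superset_mono) blast

lemma scs_zero: "critical_set f x u {} \<Longrightarrow> scs u x f = 0"
proof -
  assume "critical_set f x u {}"
  then have "scs u x f \<le> enat (card ({}::'a set))" unfolding scs_def by (intro Inf_lower) blast
  then show ?thesis using le_zero_eq enat_0 by (metis card.empty)
qed

lemma rho_mono: "share_function \<rho> \<Longrightarrow> a \<le> b \<Longrightarrow> \<rho> b \<le> \<rho> a"
  by (auto simp: share_function_def antimono_def)

lemma rho_bound: "share_function \<rho> \<Longrightarrow> 0 \<le> \<rho> k \<and> \<rho> k \<le> 1"
  using rho_mono[of \<rho> k \<infinity>] rho_mono[of \<rho> 0 k] by (auto simp: share_function_def)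

context core begin

lemma Q:
  assumes sf: "share_function \<rho>" and ne: "f u \<noteq> h u"
  shows "\<rho> (scs u x h) + \<rho> (scs (flip {x} u) x h) \<le> \<rho> (scs u x f) + \<rho> (scs (flip {x} u) x f)"
proof (cases "g (flip {x} u) = g u")
  case False
  have "scs u x f = 0" "scs (flip {x} u) x f = 0"
    using scs_zero[OF L2(1)[OF ne False]] scs_zero[OF L2(2)[OF ne False]] by auto
  then show ?thesis using sf rho_bound[OF sf, of "scs u x h"] rho_bound[OF sf, of "scs (flip {x} u) x h"]
    by (simp add: share_function_def)
next
  case True
  have "scs u x f \<le> scs (flip {x} u) x h" by (rule scs_mono) (rule L3(1)[OF ne True])
  moreover have "scs (flip {x} u) x f \<le> scs u x h" by (rule scs_mono) (rule L3(2)[OF ne True])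
  ultimately show ?thesis using rho_mono[OF sf] by (smt (verit))
qed

lemma P:
  assumes sf: "share_function \<rho>"
  shows "\<rho> (scs u x h) + \<rho> (scs (flip {x} u) x h) \<le> \<rho> (scs u x f) + \<rho> (scs (flip {x} u) x f)"
proof (cases "f u = h u")
  case False then show ?thesis using Q[OF sf] by blast
next
  case T1: True
  show ?thesis
  proof (cases "f (flip {x} u) = h (flip {x} u)")
    case False then show ?thesis using Q[OF sf False] by simp
  next
    case True
    have "scs u x f \<le> scs u x h" by (rule scs_mono) (rule L1[OF T1])
    moreover have "scs (flip {x} u) x f \<le> scs (flip {x} u) x h" by (rule scs_mono) (rule L1[OF True])
    ultimately show ?thesis using rho_mono[OF sf] by (smt (verit))
  qed
qed

end

lemma sum_flip: "(\<Sum>u\<in>(UNIV :: ('x::finite) assignment set). A (flip {x} u)) = (\<Sum>u\<in>UNIV. A u)"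
  by (rule sum.reindex_bij_witness[of _ "flip {x}" "flip {x}"]) auto

lemma sum_le:
  fixes f h g F0 F1 H0 H1 :: "('x::finite) boolfun"
  assumes co: "core f h g F0 F1 H0 H1 x" and sf: "share_function \<rho>"
  shows "(\<Sum>u\<in>(UNIV :: 'x assignment set). \<rho> (scs u x h)) \<le> (\<Sum>u\<in>UNIV. \<rho> (scs u x f))"
proof -
  have "2 * (\<Sum>u\<in>(UNIV :: 'x assignment set). \<rho> (scs u x h))
      = (\<Sum>u\<in>UNIV. \<rho> (scs u x h) + \<rho> (scs (flip {x} u) x h))"
    by (simp add: sum.distrib sum_flip[of "\<lambda>u. \<rho> (scs u x h)"])
  also have "\<dots> \<le> (\<Sum>u\<in>UNIV. \<rho> (scs u x f) + \<rho> (scs (flip {x} u) x f))"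
    by (rule sum_mono) (rule core.P[OF co sf])
  also have "\<dots> = 2 * (\<Sum>u\<in>(UNIV :: 'x assignment set). \<rho> (scs u x f))"
    by (simp add: sum.distrib sum_flip[of "\<lambda>u. \<rho> (scs u x f)"])
  finally show ?thesis by simp
qed




lemma card_pos: "0 < card (UNIV :: ('x::finite) assignment set)"
  by (simp add: card_gt_0_iff)

lemma blame_bound:
  assumes sf: "share_function \<rho>"
  shows "0 \<le> blame \<rho> x (f :: ('x::finite) boolfun) \<and> blame \<rho> x f \<le> 1"
proof -
  let ?N = "card (UNIV :: 'x assignment set)"
  have a: "0 \<le> (\<Sum>u\<in>(UNIV :: 'x assignment set). \<rho> (scs u x f))"
    by (rule sum_nonneg) (use rho_bound[OF sf] in blast)
  have "(\<Sum>u\<in>(UNIV :: 'x assignment set). \<rho> (scs u x f)) \<le> of_nat ?N * 1"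
    by (rule sum_bounded_above) (use rho_bound[OF sf] in blast)
  then show ?thesis using a card_pos[where 'x='x] unfolding blame_def by (simp add: field_simps)
qed

lemma blame_dum:
  assumes sf: "share_function \<rho>" and nd: "x \<notin> dep f"
  shows "blame \<rho> x (f :: ('x::finite) boolfun) = 0"
proof -
  have "\<And>u S. \<not> critical_set f x u S"
  proof
    fix u S assume c: "critical_set f x u S"
    then have xS: "x \<notin> S" by (simp add: critical_set_def)
    show False using c nodep_flip[OF nd, of "flip S u"] unfolding critical_set_def flip_ins[OF xS] by auto
  qed
  then have "\<And>u. scs u x f = \<infinity>" unfolding scs_def by (simp add: top_enat_def[symmetric])
  then show ?thesis using sf unfolding blame_def share_function_def by simp
qed

lemma blame_dic:
  fixes x :: "'x::finite"
  assumes sf: "share_function \<rho>"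
  shows "blame \<rho> x (\<lambda>u. u x :: bool) = 1 \<and> blame \<rho> x (\<lambda>u. \<not> u x) = (1 :: real)"
proof -
  have c1: "critical_set (\<lambda>u. u x) x u {}" for u
    by (auto simp: critical_set_def flip_def)
  have c2: "critical_set (\<lambda>u. \<not> u x) x u {}" for u
    by (auto simp: critical_set_def flip_def)
  have "scs u x (\<lambda>u. u x) = 0" "scs u x (\<lambda>u. \<not> u x) = 0" for u
    using scs_zero[OF c1] scs_zero[OF c2] by auto
  moreover have r0: "\<rho> 0 = 1" using sf by (simp add: share_function_def)
  moreover have "(\<Sum>u\<in>(UNIV :: 'x assignment set). (1::real)) / real (card (UNIV :: 'x assignment set)) = 1"
    using card_pos[where 'x='x] by (simp only: sum_constant) simp
  ultimately show ?thesis unfolding blame_def by simp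
qed

lemma blame_unbiased:
  "blame \<rho> x g = blame \<rho> x (\<lambda>u. \<not> g u)"
proof -
  have "\<And>u S. critical_set (\<lambda>u. \<not> g u) x u S = critical_set g x u S"
    by (auto simp: critical_set_def)
  then have "\<And>u. scs u x (\<lambda>u. \<not> g u) = scs u x g" unfolding scs_def by simp
  then show ?thesis unfolding blame_def by simp
qed

lemma blame_flipfun:
  "blame \<rho> x (f :: ('x::finite) boolfun) = blame \<rho> x (flipfun f y)"
proof -
  have "\<And>u S. critical_set (flipfun f y) x u S = critical_set f x (flip {y} u) S"
    unfolding critical_set_def flipfun_def by (simp add: flip_comm[of "{y}"])
  then have "\<And>u. scs u x (flipfun f y) = scs (flip {y} u) x f" unfolding scs_def by simp
  then show ?thesis unfolding blame_def using sum_flip[of "\<lambda>u. \<rho> (scs u x f)" y] by simp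
qed

lemma perm_fun_eq: "bij \<sigma> \<Longrightarrow> perm_fun \<sigma> f v = f (v \<circ> \<sigma>)"
  by (simp add: perm_fun_def perm_asg_def inv_inv_eq comp_def)

lemma flip_comp: "flip S v \<circ> \<sigma> = flip (\<sigma> -` S) (v \<circ> \<sigma>)"
  by (auto simp: flip_def fun_eq_iff)

lemma crit_perm:
  assumes b: "bij \<sigma>"
  shows "critical_set (perm_fun \<sigma> f) (\<sigma> x) v S = critical_set f x (v \<circ> \<sigma>) (\<sigma> -` S)"
proof -
  have i: "inj \<sigma>" using b bij_is_inj by blast
  have "\<sigma> -` (S \<union> {\<sigma> x}) = \<sigma> -` S \<union> {x}" using i by (auto dest: injD)
  moreover have "(\<sigma> x \<in> S) = (x \<in> \<sigma> -` S)" by simp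
  ultimately show ?thesis
    unfolding critical_set_def perm_fun_eq[OF b] flip_comp comp_def[symmetric] by simp
qed

lemma scs_perm:
  assumes b: "bij \<sigma>"
  shows "scs v (\<sigma> x) (perm_fun \<sigma> f) = scs (v \<circ> \<sigma>) x (f :: ('x::finite) boolfun)"
proof -
  have i: "inj \<sigma>" using b bij_is_inj by blast
  have cv: "card (\<sigma> -` S) = card S" for S
  proof -
    have "\<sigma> -` S = inv \<sigma> ` S" using b by (simp add: bij_vimage_eq_inv_image)
    moreover have "inj (inv \<sigma>)" using b by (simp add: bij_imp_bij_inv bij_is_inj)
    ultimately show ?thesis by (simp add: card_image inj_on_subset)
  qed
  have "{enat (card S) |S. critical_set (perm_fun \<sigma> f) (\<sigma> x) v S}
      = {enat (card T) |T. critical_set f x (v \<circ> \<sigma>) T}"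
  proof (intro equalityI subsetI)
    fix k assume "k \<in> {enat (card S) |S. critical_set (perm_fun \<sigma> f) (\<sigma> x) v S}"
    then obtain S where "k = enat (card S)" "critical_set (perm_fun \<sigma> f) (\<sigma> x) v S" by blast
    then have "critical_set f x (v \<circ> \<sigma>) (\<sigma> -` S)" "k = enat (card (\<sigma> -` S))"
      using crit_perm[OF b, of f x v S] cv[of S] by simp_all
    then show "k \<in> {enat (card T) |T. critical_set f x (v \<circ> \<sigma>) T}" by blast
  next
    fix k assume "k \<in> {enat (card T) |T. critical_set f x (v \<circ> \<sigma>) T}"
    then obtain T where k: "k = enat (card T)" and c: "critical_set f x (v \<circ> \<sigma>) T" by blast
    have "\<sigma> -` (\<sigma> ` T) = T" using i by (simp add: inj_vimage_image_eq)
    then have "critical_set (perm_fun \<sigma> f) (\<sigma> x) v (\<sigma> ` T)" using crit_perm[OF b, of f x v "\<sigma> ` T"] c by simp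
    moreover have "card (\<sigma> ` T) = card T" using i by (simp add: card_image inj_on_subset)
    ultimately show "k \<in> {enat (card S) |S. critical_set (perm_fun \<sigma> f) (\<sigma> x) v S}"
      using k by (metis (mono_tags, lifting) mem_Collect_eq)
  qed
  then show ?thesis unfolding scs_def by simp
qed

lemma blame_perm:
  assumes b: "bij \<sigma>"
  shows "blame \<rho> x (f :: ('x::finite) boolfun) = blame \<rho> (\<sigma> x) (perm_fun \<sigma> f)"
proof -
  have s: "surj \<sigma>" using b bij_is_surj by blast
  have i: "inj \<sigma>" using b bij_is_inj by blast
  have "(\<Sum>v\<in>(UNIV :: 'x assignment set). \<rho> (scs (v \<circ> \<sigma>) x f)) = (\<Sum>u\<in>UNIV. \<rho> (scs u x f))"
    by (rule sum.reindex_bij_witness[of _ "\<lambda>u. u \<circ> inv \<sigma>" "\<lambda>v. v \<circ> \<sigma>"])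
       (auto simp: o_assoc[symmetric] inv_o_cancel[OF i] surj_iff[THEN iffD1, OF s])
  then show ?thesis unfolding blame_def scs_perm[OF b] by simp
qed

lemma blame_modec:
  fixes f g h :: "('x::finite) boolfun"
  assumes sf: "share_function \<rho>" and mf: "mono_modular f g" and mh: "mono_modular h g"
    and c1: "mod_cof h g True \<le> mod_cof f g True" and c0: "mod_cof f g False \<le> mod_cof h g False"
    and xg: "x \<in> dep g"
  shows "blame \<rho> x h \<le> blame \<rho> x f"
proof -
  obtain l z where wf: "mod_witness f g l z" and ml: "monotone_in l z" and nc: "nonconstant g"
    using mf unfolding mono_modular_def by blast
  obtain l' z' where wh: "mod_witness h g l' z'" and ml': "monotone_in l' z'"
    using mh unfolding mono_modular_def by blast
  have ef: "mod_cof f g c = cof l z c" for c using mod_cof_eq[OF wf nc] .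
  have eh: "mod_cof h g c = cof l' z' c" for c using mod_cof_eq[OF wh nc] .
  have xl: "x \<notin> dep l" "x \<notin> dep l'" using wf wh xg unfolding mod_witness_def by blast+
  have co: "core f h g (cof l z False) (cof l z True) (cof l' z' False) (cof l' z' True) x"
  proof
    fix u
    show "f u = (g u \<and> cof l z True u \<or> \<not> g u \<and> cof l z False u)"
      using wf unfolding mod_witness_def subst_def by simp
    show "h u = (g u \<and> cof l' z' True u \<or> \<not> g u \<and> cof l' z' False u)"
      using wh unfolding mod_witness_def subst_def by simp
    show "cof l' z' False u \<Longrightarrow> cof l' z' True u" using ml' unfolding monotone_in_def by blast
    show "cof l' z' True u \<Longrightarrow> cof l z True u" using c1 unfolding ef eh le_fun_def le_bool_def by blast
    show "cof l z False u \<Longrightarrow> cof l' z' False u" using c0 unfolding ef eh le_fun_def le_bool_def by blast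
    show "cof l z False (flip {x} u) = cof l z False u" by (rule nodep_flip) (rule cof_dep[OF xl(1)])
    show "cof l z True (flip {x} u) = cof l z True u" by (rule nodep_flip) (rule cof_dep[OF xl(1)])
    show "cof l' z' False (flip {x} u) = cof l' z' False u" by (rule nodep_flip) (rule cof_dep[OF xl(2)])
    show "cof l' z' True (flip {x} u) = cof l' z' True u" by (rule nodep_flip) (rule cof_dep[OF xl(2)])
  qed
  show ?thesis unfolding blame_def
    using sum_le[OF co sf] card_pos[where 'x='x] by (simp add: divide_right_mono)
qed

theorem mainTheorem3:
  fixes \<rho> :: "enat \<Rightarrow> real"
  assumes "share_function \<rho>"
  shows "IVF (blame \<rho> :: ('x::finite) value_fun) \<and> unbiased (blame \<rho> :: 'x value_fun)"
proof
  show "IVF (blame \<rho> :: ('x::finite) value_fun)"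
    unfolding IVF_def
  proof (intro conjI allI impI)
    fix x and f :: "'x boolfun"
    show "0 \<le> blame \<rho> x f" using blame_bound[OF assms] by blast
    show "blame \<rho> x f \<le> 1" using blame_bound[OF assms] by blast
  next
    fix x and f :: "'x boolfun" assume "x \<notin> dep f"
    then show "blame \<rho> x f = 0" using blame_dum[OF assms] by blast
  next
    fix x :: 'x
    show "blame \<rho> x (\<lambda>u. u x) = 1" using blame_dic[OF assms] by blast
    show "blame \<rho> x (\<lambda>u. \<not> u x) = 1" using blame_dic[OF assms] by blast
  next
    fix x and f :: "'x boolfun" and \<sigma> :: "'x \<Rightarrow> 'x" assume "bij \<sigma>"
    then show "blame \<rho> x f = blame \<rho> (\<sigma> x) (perm_fun \<sigma> f)" by (rule blame_perm)
  next
    fix x y and f :: "'x boolfun"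
    show "blame \<rho> x f = blame \<rho> x (flipfun f y)" by (rule blame_flipfun)
  next
    fix x and f g h :: "'x boolfun"
    assume "mono_modular f g \<and> mono_modular h g \<and> mod_cof h g True \<le> mod_cof f g True
        \<and> mod_cof f g False \<le> mod_cof h g False \<and> x \<in> dep g"
    then show "blame \<rho> x h \<le> blame \<rho> x f" using blame_modec[OF assms] by blast
  qed
  show "unbiased (blame \<rho> :: 'x value_fun)" unfolding unbiased_def using blame_unbiased by blast
qed


end
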